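(* Let $n\ge m\ge 1$ be integers, $N=nm+n+m$, and $d\in\{1,-1\}$. Put $s_1=m(m+3)/2$ and $s_2=(n-m)(m+1)$, and define integers $x_1,\dots,x_N$ recursively as follows. For $1\le i\le s_1$, with $\alpha=\lfloor\frac{\sqrt{8i+1}-1}{2}\rfloor$, $$x_i=n+1-(-1)^{\alpha}d\,(2i-\alpha(\alpha+2)).$$ For $s_1+1\le i\le s_1+s_2$, with $\beta=\lfloor\frac{i-s_1+m}{m+1}\rfloor$ and $p=i-s_1-(\beta-1)(m+1)$, $$x_i=x_{s_1}-\beta-(-1)^{m+\beta}d\,\bigl(2p-2-m(1+(-1)^{\beta})\bigr).$$ For $s_1+s_2+1\le i\le N$, with $\gamma=\lfloor m-\sqrt{m(m+1)-2(i-s_1-s_2)+9/4}+3/2\rfloor$ and $q=i-s_1-s_2-(\gamma-1)(m+1)+\gamma(\gamma-1)/2$, $$x_i=x_{s_1+s_2}-d\bigl((-1)^{n+\gamma}(\gamma+2q-m-2)-m(-1)^n\bigr).$$ Then starting from the initial configuration $b^nOw^m$ and, for $i=1,\dots,N$, moving in step $i$ the checker at position $x_i$ into the current vacancy, every step is a legal move, the final configuration $w^mOb^n$ is reached after step $N$, and hence this is an optimal move sequence (of the minimum possible length $nm+n+m$). Moreover $d=(n+1)-x_1$ is the direction of the first move.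
   Context: The game: positions $1,\dots,n+m+1$ in a row, each holding a black checker ($b$), a white checker ($w$) or nothing, with exactly one empty position (the vacancy $O$). Initial configuration $b^nOw^m$ (vacancy at position $n+1$), final configuration $w^mOb^n$. A legal move is a slide (a checker adjacent to the vacancy moves into it) or a jump (a checker at distance two from the vacancy jumps over the checker between them into it); after moving the checker at position $x_i$, position $x_i$ becomes the new vacancy. *)

theory Defs
  imports Complex_Main
begin

datatype cell = Black | White | Empty

text \<open>A configuration assigns a cell content to every integer position; only the positions
  1..L (L = n+m+1) are part of the board, all other positions are Empty and never touched.\<close>
type_synonym config = "int \<Rightarrow> cell"

definition init_conf :: "nat \<Rightarrow> nat \<Rightarrow> config" where
  "init_conf n m p = (if 1 \<le> p \<and> p \<le> int n then Black
     else if p = int n + 1 then Empty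
     else if int n + 1 < p \<and> p \<le> int n + int m + 1 then White
     else Empty)"

definition final_conf :: "nat \<Rightarrow> nat \<Rightarrow> config" where
  "final_conf n m p = (if 1 \<le> p \<and> p \<le> int m then White
     else if p = int m + 1 then Empty
     else if int m + 1 < p \<and> p \<le> int n + int m + 1 then Black
     else Empty)"

definition vacancy :: "int \<Rightarrow> config \<Rightarrow> int" where
  "vacancy L c = (THE v. 1 \<le> v \<and> v \<le> L \<and> c v = Empty)"

definition legal_move :: "int \<Rightarrow> config \<Rightarrow> int \<Rightarrow> bool" where
  "legal_move L c x \<longleftrightarrow>
     (\<exists>!v. 1 \<le> v \<and> v \<le> L \<and> c v = Empty) \<and>
     1 \<le> x \<and> x \<le> L \<and> c x \<noteq> Empty \<and>
     (let v = vacancy L c in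
        \<bar>x - v\<bar> = 1 \<or> (\<bar>x - v\<bar> = 2 \<and> c ((x + v) div 2) \<noteq> Empty))"

definition apply_move :: "int \<Rightarrow> config \<Rightarrow> int \<Rightarrow> config" where
  "apply_move L c x = (c(vacancy L c := c x)) (x := Empty)"

fun legal_seq :: "int \<Rightarrow> config \<Rightarrow> int list \<Rightarrow> bool" where
  "legal_seq L c [] = True"
| "legal_seq L c (x # xs) = (legal_move L c x \<and> legal_seq L (apply_move L c x) xs)"

definition run_moves :: "int \<Rightarrow> config \<Rightarrow> int list \<Rightarrow> config" where
  "run_moves L c xs = foldl (apply_move L) c xs"

definition s1 :: "nat \<Rightarrow> int" where "s1 m = int m * (int m + 3) div 2"
definition s2 :: "nat \<Rightarrow> nat \<Rightarrow> int" where "s2 n m = (int n - int m) * (int m + 1)"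

definition xA :: "nat \<Rightarrow> int \<Rightarrow> int \<Rightarrow> int" where
  "xA n d i = (let \<alpha> = \<lfloor>(sqrt (8 * real_of_int i + 1) - 1) / 2\<rfloor> in
     int n + 1 - (-1) ^ nat \<alpha> * d * (2 * i - \<alpha> * (\<alpha> + 2)))"

definition xB :: "nat \<Rightarrow> nat \<Rightarrow> int \<Rightarrow> int \<Rightarrow> int" where
  "xB n m d i = (if i \<le> s1 m then xA n d i else
     (let \<beta> = (i - s1 m + int m) div (int m + 1);
          p = i - s1 m - (\<beta> - 1) * (int m + 1) in
      xA n d (s1 m) - \<beta> - (-1) ^ nat (int m + \<beta>) * d * (2 * p - 2 - int m * (1 + (-1) ^ nat \<beta>))))"

definition xC :: "nat \<Rightarrow> nat \<Rightarrow> int \<Rightarrow> int \<Rightarrow> int" where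
  "xC n m d i = (if i \<le> s1 m + s2 n m then xB n m d i else
     (let k = i - s1 m - s2 n m;
          \<gamma> = \<lfloor>real m - sqrt (real m * (real m + 1) - 2 * real_of_int k + 9 / 4) + 3 / 2\<rfloor>;
          q = k - (\<gamma> - 1) * (int m + 1) + \<gamma> * (\<gamma> - 1) div 2 in
      xB n m d (s1 m + s2 n m)
        - d * ((-1) ^ nat (int n + \<gamma>) * (\<gamma> + 2 * q - int m - 2) - int m * (-1) ^ n)))"

definition move_seq :: "nat \<Rightarrow> nat \<Rightarrow> int \<Rightarrow> int list" where
  "move_seq n m d = map (xC n m d) [1 .. int (n * m + n + m)]"

end

theory Submission
  imports Defs
begin

definition cwf :: "int \<Rightarrow> config \<Rightarrow> int \<Rightarrow> bool" where
  "cwf L c v \<longleftrightarrow> 1 \<le> v \<and> v \<le> L \<and> c v = Empty \<and> (\<forall>p. 1 \<le> p \<and> p \<le> L \<and> p \<noteq> v \<longrightarrow> c p \<noteq> Empty)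
     \<and> (\<forall>p. p < 1 \<or> L < p \<longrightarrow> c p = Empty)"

lemma wf_vac: "cwf L c v \<Longrightarrow> vacancy L c = v"
  unfolding vacancy_def cwf_def by (rule the_equality) auto

lemma wf_unique: "cwf L c v \<Longrightarrow> \<exists>!u. 1 \<le> u \<and> u \<le> L \<and> c u = Empty"
  unfolding cwf_def by blast

lemma wf_legal:
  assumes "cwf L c v" "1 \<le> x" "x \<le> L" "\<bar>x - v\<bar> = 1 \<or> \<bar>x - v\<bar> = 2"
  shows "legal_move L c x"
proof -
  have "x \<noteq> v" using assms(4) by auto
  then have cx: "c x \<noteq> Empty" using assms unfolding cwf_def by auto
  have mid: "\<bar>x - v\<bar> = 2 \<Longrightarrow> c ((x + v) div 2) \<noteq> Empty"
  proof -
    assume h: "\<bar>x - v\<bar> = 2"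
    then have "(x + v) div 2 = x + 1 \<or> (x + v) div 2 = x - 1" by auto
    moreover have "1 \<le> v" "v \<le> L" using assms(1) unfolding cwf_def by auto
    ultimately have "1 \<le> (x + v) div 2" "(x + v) div 2 \<le> L" "(x + v) div 2 \<noteq> v" using h assms(2,3) by auto
    then show ?thesis using assms(1) unfolding cwf_def by auto
  qed
  show ?thesis unfolding legal_move_def Let_def wf_vac[OF assms(1)]
    using wf_unique[OF assms(1)] assms cx mid by auto
qed

lemma wf_apply:
  assumes "cwf L c v" "1 \<le> x" "x \<le> L" "x \<noteq> v"
  shows "cwf L (apply_move L c x) x" "apply_move L c x = (c(v := c x))(x := Empty)"
proof -
  show eq: "apply_move L c x = (c(v := c x))(x := Empty)" unfolding apply_move_def wf_vac[OF assms(1)] ..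
  show "cwf L (apply_move L c x) x" unfolding eq using assms unfolding cwf_def by auto
qed

lemma legal_seq_append: "legal_seq L c (xs @ ys) \<longleftrightarrow> legal_seq L c xs \<and> legal_seq L (run_moves L c xs) ys"
  by (induction xs arbitrary: c) (auto simp: run_moves_def)

lemma run_moves_append: "run_moves L c (xs @ ys) = run_moves L (run_moves L c xs) ys"
  by (simp add: run_moves_def)

lemma run_moves_Cons: "run_moves L c (x # xs) = run_moves L (apply_move L c x) xs"
  by (simp add: run_moves_def)

lemma run_moves_Nil[simp]: "run_moves L c [] = c"
  by (simp add: run_moves_def)

definition swp :: "int \<Rightarrow> int \<Rightarrow> int \<Rightarrow> nat \<Rightarrow> int list" where
  "swp v s t K = map (\<lambda>j. v + s + 2*t*int j) [0..<Suc K]"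

definition sres :: "config \<Rightarrow> int \<Rightarrow> int \<Rightarrow> int \<Rightarrow> nat \<Rightarrow> config" where
  "sres c v s t K p = (if p = v then c (v+s) else if p = v+s+2*t*int K then Empty
     else if (\<exists>j<K. p = v+s+2*t*int j) then c (p + 2*t) else c p)"

lemma swp_Suc: "swp v s t (Suc K) = swp v s t K @ [v + s + 2*t*int (Suc K)]"
  unfolding swp_def by simp

lemma sweep:
  assumes "cwf L c v" "s = 1 \<or> s = -1" "t = 1 \<or> t = -1"
    and "\<And>j. j \<le> K \<Longrightarrow> 1 \<le> v+s+2*t*int j \<and> v+s+2*t*int j \<le> L"
  shows "legal_seq L c (swp v s t K) \<and> run_moves L c (swp v s t K) = sres c v s t K
         \<and> cwf L (sres c v s t K) (v+s+2*t*int K)"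
  using assms(4)
proof (induction K)
  case 0
  have b: "1 \<le> v+s" "v+s \<le> L" using 0[of 0] by auto
  have ne: "v + s \<noteq> v" using assms(2) by auto
  have lm: "legal_move L c (v+s)" by (rule wf_legal[OF assms(1) b]) (use assms(2) in auto)
  have ap: "apply_move L c (v+s) = (c(v := c (v+s)))(v+s := Empty)" and w: "cwf L (apply_move L c (v+s)) (v+s)"
    using wf_apply[OF assms(1) b ne] by auto
  have "sres c v s t 0 = (c(v := c (v+s)))(v+s := Empty)"
    unfolding sres_def using ne by (auto simp: fun_eq_iff)
  moreover have "run_moves L c (swp v s t 0) = apply_move L c (v+s)" by (simp add: swp_def run_moves_Cons)
  moreover have "legal_seq L c (swp v s t 0)" using lm by (simp add: swp_def)
  moreover have "v + s + 2*t*int 0 = v+s" by simp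
  ultimately show ?case using ap w by metis
next
  case (Suc K)
  let ?x = "\<lambda>j::nat. v+s+2*t*int j"
  have IH: "legal_seq L c (swp v s t K) \<and> run_moves L c (swp v s t K) = sres c v s t K
         \<and> cwf L (sres c v s t K) (?x K)" using Suc by auto
  have b: "1 \<le> ?x (Suc K)" "?x (Suc K) \<le> L" using Suc.prems[of "Suc K"] by auto
  have tt: "t*t = 1" using assms(3) by auto
  have d2: "\<bar>?x (Suc K) - ?x K\<bar> = 2" using assms(3) by auto
  have ne: "?x (Suc K) \<noteq> ?x K" using d2 by auto
  have lm: "legal_move L (sres c v s t K) (?x (Suc K))"
    by (rule wf_legal[OF _ b]) (use IH d2 in auto)
  have nv: "?x (Suc K) \<noteq> v" using assms(2,3) by auto
  have nj: "\<And>j. j < K \<Longrightarrow> ?x (Suc K) \<noteq> ?x j"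
  proof
    fix j assume "j < K" "?x (Suc K) = ?x j"
    then have "t * (2*int (Suc K)) = t * (2 * int j)" by (simp add: algebra_simps)
    then show False using \<open>j < K\<close> assms(3) by auto
  qed
  have val: "sres c v s t K (?x (Suc K)) = c (?x (Suc K))"
    unfolding sres_def using nv ne nj by auto
  have ap: "apply_move L (sres c v s t K) (?x (Suc K)) = ((sres c v s t K)(?x K := c (?x (Suc K))))(?x (Suc K) := Empty)"
    and w: "cwf L (apply_move L (sres c v s t K) (?x (Suc K))) (?x (Suc K))"
  proof -
    have wK: "cwf L (sres c v s t K) (?x K)" using IH by simp
    show "apply_move L (sres c v s t K) (?x (Suc K)) = ((sres c v s t K)(?x K := c (?x (Suc K))))(?x (Suc K) := Empty)"
      using wf_apply(2)[OF wK b ne] val by simp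
    show "cwf L (apply_move L (sres c v s t K) (?x (Suc K))) (?x (Suc K))"
      using wf_apply(1)[OF wK b ne] by simp
  qed
  have inj: "\<And>i j. ?x i = ?x j \<Longrightarrow> i = j"
  proof -
    fix i j assume "?x i = ?x j"
    then have "t * (2*int i) = t * (2 * int j)" by (simp add: algebra_simps)
    then show "i = j" using assms(3) by auto
  qed
  have xKv: "?x K \<noteq> v" using assms(2,3) by (auto; presburger)
  have eq: "((sres c v s t K)(?x K := c (?x (Suc K))))(?x (Suc K) := Empty) = sres c v s t (Suc K)"
  proof
    fix p
    show "(((sres c v s t K)(?x K := c (?x (Suc K))))(?x (Suc K) := Empty)) p = sres c v s t (Suc K) p"
    proof (cases "p = ?x (Suc K)")
      case True then show ?thesis unfolding sres_def using nv by auto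
    next
      case F1: False
      show ?thesis
      proof (cases "p = ?x K")
        case True
        then have "p + 2*t = ?x (Suc K)" by (simp add: algebra_simps)
        then show ?thesis unfolding sres_def using True F1 xKv by (simp only: fun_upd_apply) (auto simp: algebra_simps)
      next
        case False
        have "(\<exists>j<Suc K. p = ?x j) \<longleftrightarrow> (\<exists>j<K. p = ?x j)"
          using False less_Suc_eq by auto
        then show ?thesis unfolding sres_def using False F1 by auto
      qed
    qed
  qed
  have r: "run_moves L c (swp v s t (Suc K)) = apply_move L (sres c v s t K) (?x (Suc K))"
    using IH by (simp add: swp_Suc run_moves_append run_moves_Cons)
  have l: "legal_seq L c (swp v s t (Suc K))"
    using IH lm by (simp add: swp_Suc legal_seq_append)
  show ?case using r l ap w eq IH by metis
qed

definition shp :: "int \<Rightarrow> int \<Rightarrow> int \<Rightarrow> bool \<Rightarrow> cell \<Rightarrow> cell \<Rightarrow> config" where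
  "shp L b0 k vl X Y p = (if p < 1 \<or> p > L then Empty else if p < b0 then X else if p > b0 + 2*k then Y
     else if vl then (if p = b0 then Empty else if even (p - b0) then Black else White)
     else (if p = b0 + 2*k then Empty else if even (p - b0) then White else Black))"

lemma ex_j: "t = 1 \<or> t = -1 \<Longrightarrow> (\<exists>j<K. p = a + 2*t*int j) \<longleftrightarrow> (even (p-a) \<and> 0 \<le> t*(p-a) \<and> t*(p-a) < 2*int K)"
proof
  assume t: "t = 1 \<or> t = -1"
  { assume "\<exists>j<K. p = a + 2*t*int j"
    then obtain j where "j<K" "p = a + 2*t*int j" by blast
    then show "even (p-a) \<and> 0 \<le> t*(p-a) \<and> t*(p-a) < 2*int K" using t by auto }
  { assume h: "even (p-a) \<and> 0 \<le> t*(p-a) \<and> t*(p-a) < 2*int K"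
    then obtain q where q: "t*(p-a) = 2*q" by (metis dvd_mult evenE)
    then have "0 \<le> q" "q < int K" using h by auto
    moreover have "p = a + 2*t*q" using q t by auto
    ultimately show "\<exists>j<K. p = a + 2*t*int j"
      by (intro exI[of _ "nat q"]) auto }
qed

lemma sres_alt: "t = 1 \<or> t = -1 \<Longrightarrow> sres c v s t K p = (if p = v then c (v+s) else if p = v+s+2*t*int K then Empty
     else if even (p-(v+s)) \<and> 0 \<le> t*(p-(v+s)) \<and> t*(p-(v+s)) < 2*int K then c (p + 2*t) else c p)"
  unfolding sres_def ex_j by simp

lemma shp_wf: "1 \<le> b0 \<Longrightarrow> b0 + 2*k \<le> L \<Longrightarrow> 0 \<le> k \<Longrightarrow> X \<noteq> Empty \<Longrightarrow> Y \<noteq> Empty \<Longrightarrow>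
  cwf L (shp L b0 k vl X Y) (if vl then b0 else b0 + 2*k)"
  unfolding cwf_def shp_def by auto

lemma shpA_vl:
  assumes "2 \<le> b0" "b0 + 2*k + 1 \<le> L" "0 \<le> k"
  shows "sres (shp L b0 k True Black White) b0 (-1) 1 (nat (k+1)) = shp L (b0-1) (k+1) False Black White"
  using assms unfolding fun_eq_iff sres_alt[of 1, simplified]
  by (auto simp: shp_def; presburger)

lemma shpA_nvl:
  assumes "2 \<le> b0" "b0 + 2*k + 1 \<le> L" "0 \<le> k"
  shows "sres (shp L b0 k False Black White) (b0+2*k) 1 (-1) (nat (k+1)) = shp L (b0-1) (k+1) True Black White"
  using assms unfolding fun_eq_iff sres_alt[of "-1", simplified]
  by (auto simp: shp_def; presburger)

lemma shpB_vl:
  assumes "2 \<le> b0" "b0 + 2*k \<le> L" "0 \<le> k"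
  shows "sres (shp L b0 k True Black Black) b0 (-1) 1 (nat k) = shp L (b0-1) k False Black Black"
  using assms unfolding fun_eq_iff sres_alt[of 1, simplified]
  by (auto simp: shp_def; presburger)

lemma shpB_nvl:
  assumes "2 \<le> b0" "b0 + 2*k \<le> L" "0 \<le> k"
  shows "sres (shp L b0 k False Black Black) (b0+2*k) (-1) (-1) (nat k) = shp L (b0-1) k True Black Black"
  using assms unfolding fun_eq_iff sres_alt[of "-1", simplified]
  by (auto simp: shp_def; presburger)

lemma shpC_vl:
  assumes "1 \<le> b0" "b0 + 2*k \<le> L" "1 \<le> k"
  shows "sres (shp L b0 k True White Black) b0 1 1 (nat (k-1)) = shp L (b0+1) (k-1) False White Black"
  using assms unfolding fun_eq_iff sres_alt[of 1, simplified]
  by (auto simp: shp_def; presburger)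

lemma shpC_nvl:
  assumes "1 \<le> b0" "b0 + 2*k \<le> L" "1 \<le> k"
  shows "sres (shp L b0 k False White Black) (b0+2*k) (-1) (-1) (nat (k-1)) = shp L (b0+1) (k-1) True White Black"
  using assms unfolding fun_eq_iff sres_alt[of "-1", simplified]
  by (auto simp: shp_def; presburger)

lemma sqrt_lt: "(0::real) \<le> z \<Longrightarrow> y < z^2 \<Longrightarrow> sqrt y < z"
  using real_sqrt_less_mono[of y "z^2"] by simp

lemma sqrt_le: "(0::real) \<le> z \<Longrightarrow> y \<le> z^2 \<Longrightarrow> sqrt y \<le> z"
  using real_sqrt_le_mono[of y "z^2"] by simp

lemma floorA:
  fixes a j i :: int
  assumes "0 \<le> a" "0 \<le> j" "j \<le> a" "2*i = a*(a+1) + 2*j"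
  shows "\<lfloor>(sqrt (8 * real_of_int i + 1) - 1) / 2\<rfloor> = a"
proof -
  have e: "8 * real_of_int i + 1 = real_of_int (4*a*a + 4*a + 8*j + 1)"
  proof -
    have "8*i + 1 = 4*a*a + 4*a + 8*j + 1" using assms(4) by (simp add: algebra_simps)
    then show ?thesis by (metis of_int_add of_int_mult of_int_numeral of_int_1)
  qed
  have l: "real_of_int (2*a+1) \<le> sqrt (8 * real_of_int i + 1)"
  proof (rule real_le_rsqrt)
    have "(2*a+1)^2 \<le> 4*a*a + 4*a + 8*j + 1" using assms by (simp add: power2_eq_square algebra_simps)
    then show "(real_of_int (2*a+1))^2 \<le> 8 * real_of_int i + 1" unfolding e by (metis of_int_le_iff of_int_power)
  qed
  have u: "sqrt (8 * real_of_int i + 1) < real_of_int (2*a+3)"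
  proof (rule sqrt_lt)
    show "0 \<le> real_of_int (2*a+3)" using assms by simp
    have "4*a*a + 4*a + 8*j + 1 < (2*a+3)^2" using assms by (simp add: power2_eq_square algebra_simps)
    then show "8 * real_of_int i + 1 < (real_of_int (2*a+3))^2" unfolding e by (metis of_int_less_iff of_int_power)
  qed
  show ?thesis unfolding floor_eq_iff using l u by simp
qed

lemma floorC:
  fixes m g k t :: int
  assumes "1 \<le> g" "g \<le> m" "0 \<le> t" "t \<le> m - g" "2*k = 2*(g-1)*(m+1) - g*(g-1) + 2 + 2*t"
  shows "\<lfloor>real_of_int m - sqrt (real_of_int m * (real_of_int m + 1) - 2 * real_of_int k + 9 / 4) + 3 / 2\<rfloor> = g"
proof -
  define r where "r = m - g"
  have X: "real_of_int m * (real_of_int m + 1) - 2 * real_of_int k + 9 / 4 = real_of_int (r*r + 3*r - 2*t) + 9/4"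
  proof -
    have "m * (m + 1) - 2 * k = r*r + 3*r - 2*t" using assms(5) unfolding r_def by (simp add: algebra_simps)
    then have "real_of_int (m * (m + 1) - 2 * k) = real_of_int (r*r + 3*r - 2*t)" by simp
    then show ?thesis by simp
  qed
  have r0: "0 \<le> r" "t \<le> r" using assms unfolding r_def by auto
  have l: "real_of_int r + 1/2 < sqrt (real_of_int (r*r + 3*r - 2*t) + 9/4)"
  proof (rule real_less_rsqrt)
    have "r*r + r < r*r + 3*r - 2*t + 2" using r0 by simp
    then have "real_of_int (r*r + r) < real_of_int (r*r + 3*r - 2*t + 2)" by linarith
    then show "(real_of_int r + 1/2)^2 < real_of_int (r*r + 3*r - 2*t) + 9/4"
      by (simp add: power2_eq_square algebra_simps)
  qed
  have u: "sqrt (real_of_int (r*r + 3*r - 2*t) + 9/4) \<le> real_of_int r + 3/2"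
  proof (rule sqrt_le)
    show "0 \<le> real_of_int r + 3/2" using r0 by simp
    have "r*r + 3*r - 2*t \<le> r*r + 3*r" using r0 assms(3) by simp
    then have "real_of_int (r*r + 3*r - 2*t) \<le> real_of_int (r*r + 3*r)" by linarith
    then show "real_of_int (r*r + 3*r - 2*t) + 9/4 \<le> (real_of_int r + 3/2)^2"
      by (simp add: power2_eq_square algebra_simps)
  qed
  have "real_of_int m = real_of_int r + real_of_int g" unfolding r_def by simp
  then show ?thesis unfolding floor_eq_iff X using l u by simp
qed

lemma seg:
  assumes "\<And>j. j \<le> K \<Longrightarrow> F (A + 1 + int j) = v + s + 2*t*int j"
  shows "map F [A+1..A+1+int K] = swp v s t K"
proof (rule nth_equalityI)
  show "length (map F [A+1..A+1+int K]) = length (swp v s t K)" by (simp add: swp_def)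
  fix i assume "i < length (map F [A+1..A+1+int K])"
  then have "i \<le> K" by simp
  then show "map F [A+1..A+1+int K] ! i = swp v s t K ! i"
    using assms[of i] by (simp add: swp_def nth_append del: upt_Suc)
qed

lemma step:
  assumes "legal_seq L c0 (map F [1..A])" "run_moves L c0 (map F [1..A]) = C1" "0 \<le> A"
    "map F [A+1..A+1+int K] = swp v s t K" "legal_seq L C1 (swp v s t K)" "run_moves L C1 (swp v s t K) = C2"
  shows "legal_seq L c0 (map F [1..A+1+int K]) \<and> run_moves L c0 (map F [1..A+1+int K]) = C2"
proof -
  have "[1..A+1+int K] = [1..A] @ [A+1..A+1+int K]" using upto_split1[of 1 "A+1" "A+1+int K"] assms(3) by simp
  then show ?thesis using assms by (simp add: legal_seq_append run_moves_append)
qed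

lemma sweep_shape:
  assumes "cwf L c v" "s = 1 \<or> s = -1" "t = 1 \<or> t = -1"
    and "\<And>j. j \<le> K \<Longrightarrow> 1 \<le> v+s+2*t*int j \<and> v+s+2*t*int j \<le> L"
    and "sres c v s t K = C2"
  shows "legal_seq L c (swp v s t K) \<and> run_moves L c (swp v s t K) = C2"
  using sweep[OF assms(1-4)] assms(5) by simp

lemma stA_vl:
  assumes "2 \<le> b0" "b0 + 2*k + 1 \<le> L" "0 \<le> k"
  shows "legal_seq L (shp L b0 k True Black White) (swp b0 (-1) 1 (nat (k+1)))
    \<and> run_moves L (shp L b0 k True Black White) (swp b0 (-1) 1 (nat (k+1))) = shp L (b0-1) (k+1) False Black White"
  by (rule sweep_shape[OF _ _ _ _ shpA_vl[OF assms]])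
     (use shp_wf[of b0 k L Black White True] assms in auto)

lemma stA_nvl:
  assumes "2 \<le> b0" "b0 + 2*k + 1 \<le> L" "0 \<le> k"
  shows "legal_seq L (shp L b0 k False Black White) (swp (b0+2*k) 1 (-1) (nat (k+1)))
    \<and> run_moves L (shp L b0 k False Black White) (swp (b0+2*k) 1 (-1) (nat (k+1))) = shp L (b0-1) (k+1) True Black White"
  by (rule sweep_shape[OF _ _ _ _ shpA_nvl[OF assms]])
     (use shp_wf[of b0 k L Black White False] assms in auto)

lemma stB_vl:
  assumes "2 \<le> b0" "b0 + 2*k \<le> L" "0 \<le> k"
  shows "legal_seq L (shp L b0 k True Black Black) (swp b0 (-1) 1 (nat k))
    \<and> run_moves L (shp L b0 k True Black Black) (swp b0 (-1) 1 (nat k)) = shp L (b0-1) k False Black Black"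
  by (rule sweep_shape[OF _ _ _ _ shpB_vl[OF assms]])
     (use shp_wf[of b0 k L Black Black True] assms in auto)

lemma stB_nvl:
  assumes "2 \<le> b0" "b0 + 2*k \<le> L" "0 \<le> k"
  shows "legal_seq L (shp L b0 k False Black Black) (swp (b0+2*k) (-1) (-1) (nat k))
    \<and> run_moves L (shp L b0 k False Black Black) (swp (b0+2*k) (-1) (-1) (nat k)) = shp L (b0-1) k True Black Black"
  by (rule sweep_shape[OF _ _ _ _ shpB_nvl[OF assms]])
     (use shp_wf[of b0 k L Black Black False] assms in auto)

lemma stC_vl:
  assumes "1 \<le> b0" "b0 + 2*k \<le> L" "1 \<le> k"
  shows "legal_seq L (shp L b0 k True White Black) (swp b0 1 1 (nat (k-1)))
    \<and> run_moves L (shp L b0 k True White Black) (swp b0 1 1 (nat (k-1))) = shp L (b0+1) (k-1) False White Black"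
  by (rule sweep_shape[OF _ _ _ _ shpC_vl[OF assms]])
     (use shp_wf[of b0 k L White Black True] assms in auto)

lemma stC_nvl:
  assumes "1 \<le> b0" "b0 + 2*k \<le> L" "1 \<le> k"
  shows "legal_seq L (shp L b0 k False White Black) (swp (b0+2*k) (-1) (-1) (nat (k-1)))
    \<and> run_moves L (shp L b0 k False White Black) (swp (b0+2*k) (-1) (-1) (nat (k-1))) = shp L (b0+1) (k-1) True White Black"
  by (rule sweep_shape[OF _ _ _ _ shpC_nvl[OF assms]])
     (use shp_wf[of b0 k L White Black False] assms in auto)

lemma divq: "0 \<le> (r::int) \<Longrightarrow> r < y \<Longrightarrow> (r + q*y) div y = q"
  by simp

lemma s1_2: "2 * s1 m = int m * (int m + 3)"
  unfolding s1_def by (simp add: algebra_simps)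

lemma xA_gen:
  assumes "0 \<le> a" "0 \<le> j" "j \<le> a" "2*i = a*(a+1) + 2*j"
  shows "xA n d i = int n + 1 - (-1)^nat a * d * (2*j - a)"
proof -
  have "2*i - a*(a+2) = 2*j - a" using assms(4) by (simp add: algebra_simps)
  then have "i*2 - a*(a+2) = 2*j - a" by simp
  then show ?thesis unfolding xA_def Let_def floorA[OF assms] by (simp add: algebra_simps)
qed

lemma xC_A:
  assumes "0 \<le> a" "a+1 \<le> int m" "int m \<le> int n" "0 \<le> j" "j \<le> a+1" "2*i = a*(a+3) + 2 + 2*j"
  shows "xC n m d i = int n + 1 - (-1)^nat (a+1) * d * (2*j - (a+1))"
proof -
  have "(a+1)*(a+4) \<le> int m * (int m + 3)" using assms(1,2) by (intro mult_mono) auto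
  then have "2*i \<le> 2 * s1 m" unfolding s1_2 using assms by (simp add: algebra_simps)
  then have i1: "i \<le> s1 m" by simp
  have "0 \<le> s2 n m" unfolding s2_def using assms by simp
  then have "i \<le> s1 m + s2 n m" using i1 by simp
  then show ?thesis unfolding xC_def xB_def using i1 xA_gen[of "a+1" j i n d] assms by (simp add: algebra_simps)
qed

lemma xA_s1: "xA n d (s1 m) = int n + 1 - (-1)^m * d * int m"
proof -
  have "xA n d (s1 m) = int n + 1 - (-1)^nat (int m) * d * (2*int m - int m)"
    by (rule xA_gen) (use s1_2[of m] in \<open>auto simp: algebra_simps\<close>)
  then show ?thesis by simp
qed

lemma xC_B:
  assumes "1 \<le> int m" "int m \<le> int n" "1 \<le> b" "b \<le> int n - int m" "0 \<le> j" "j \<le> int m"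
    "i = s1 m + (b-1)*(int m+1) + 1 + j"
  shows "xC n m d i = xA n d (s1 m) - b - (-1)^nat (int m + b) * d * (2*(j+1) - 2 - int m * (1 + (-1)^nat b))"
proof -
  have "0 \<le> (b-1)*(int m+1)" using assms by (intro mult_nonneg_nonneg) auto
  then have g1: "\<not> i \<le> s1 m" using assms by linarith
  have "(b-1)*(int m+1) + 1 + j \<le> (b-1)*(int m+1) + (int m + 1)" using assms by simp
  also have "\<dots> = b * (int m + 1)" by (simp add: algebra_simps)
  also have "\<dots> \<le> (int n - int m)*(int m+1)" using assms by (intro mult_right_mono) auto
  finally have g2: "i \<le> s1 m + s2 n m" unfolding s2_def using assms by simp
  have bd: "(i - s1 m + int m) div (int m + 1) = b"
  proof -
    have e: "i - s1 m + int m = j + (b * (int m + 1))" using assms by (simp add: algebra_simps)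
    show ?thesis unfolding e by (rule divq) (use assms in auto)
  qed
  have pp: "i - s1 m - (b - 1) * (int m + 1) = j + 1" using assms by simp
  show ?thesis unfolding xC_def xB_def Let_def bd pp using g1 g2 by simp
qed

lemma xC_C:
  assumes "1 \<le> int m" "int m \<le> int n" "1 \<le> g" "g \<le> int m" "0 \<le> t" "t \<le> int m - g"
    "2*(i - s1 m - s2 n m) = 2*(g-1)*(int m+1) - g*(g-1) + 2 + 2*t"
  shows "xC n m d i = xB n m d (s1 m + s2 n m) - d * ((-1)^nat (int n + g) * (g + 2*(t+1) - int m - 2) - int m * (-1)^n)"
proof -
  have "0 \<le> (g-1)*(2*int m + 2 - g)" using assms by (intro mult_nonneg_nonneg) auto
  then have "2 \<le> 2*(i - s1 m - s2 n m)" using assms(5,7) by (simp add: algebra_simps)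
  then have g1: "\<not> i \<le> s1 m + s2 n m" by simp
  have fl: "\<lfloor>real m - sqrt (real m * (real m + 1) - 2 * real_of_int (i - s1 m - s2 n m) + 9 / 4) + 3 / 2\<rfloor> = g"
    using floorC[OF assms(3,4,5,6,7)] by simp
  have ev: "even (g*(g-1))" by simp
  have q: "i - s1 m - s2 n m - (g - 1) * (int m + 1) + g * (g - 1) div 2 = t + 1"
  proof -
    have "2 * (g * (g - 1) div 2) = g*(g-1)" using ev by simp
    then show ?thesis using assms(7) by (simp add: algebra_simps)
  qed
  show ?thesis unfolding xC_def Let_def using g1 fl q by simp
qed

lemma init_shp: "init_conf n m = shp (int n + int m + 1) (int n + 1) 0 vl Black White"
  unfolding init_conf_def shp_def fun_eq_iff by auto

lemma final_shp: "final_conf n m = shp (int n + int m + 1) (int m + 1) 0 vl White Black"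
  unfolding final_conf_def shp_def fun_eq_iff by auto

lemma sgn_cases: "d = 1 \<or> d = -1 \<Longrightarrow> (-1::int)^k * d = 1 \<or> (-1::int)^k * d = -1"
  by (cases "even k") auto

lemma stageA:
  assumes m1: "1 \<le> m" and mn: "m \<le> n" and dd: "d = 1 \<or> d = -1"
  shows "k \<le> m \<Longrightarrow> legal_seq (int n + int m + 1) (init_conf n m) (map (xC n m d) [1..int k*(int k+3) div 2])
     \<and> run_moves (int n + int m + 1) (init_conf n m) (map (xC n m d) [1..int k*(int k+3) div 2])
        = shp (int n + int m + 1) (int n+1-int k) (int k) ((-1)^k * d = 1) Black White"
proof (induction k)
  case 0
  then show ?case using init_shp by simp
next
  case (Suc k)
  let ?L = "int n + int m + 1"
  let ?F = "xC n m d"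
  define a where "a = int k"
  define A where "A = a*(a+3) div 2"
  have a0: "0 \<le> a" "a + 1 \<le> int m" using Suc.prems unfolding a_def by auto
  have A2: "2*A = a*(a+3)" unfolding A_def by simp
  have A0: "0 \<le> A" proof - have "0 \<le> a*(a+3)" using a0 by simp then show ?thesis using A2 by simp qed
  have IH: "legal_seq ?L (init_conf n m) (map ?F [1..A]) \<and> run_moves ?L (init_conf n m) (map ?F [1..A])
        = shp ?L (int n+1-a) a ((-1)^k * d = 1) Black White"
    using Suc unfolding a_def A_def by simp
  have idx: "int (Suc k) * (int (Suc k) + 3) div 2 = A + 1 + int (Suc k)"
  proof -
    have "int (Suc k) * (int (Suc k) + 3) = 2*A + 2*(1 + int (Suc k))" unfolding A2 a_def by (simp add: algebra_simps)
    then show ?thesis by simp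
  qed
  have Fj: "\<And>j. j \<le> Suc k \<Longrightarrow> ?F (A + 1 + int j) = int n + 1 + (-1)^k * d * (2*int j - (a+1))"
  proof -
    fix j assume "j \<le> Suc k"
    then have "?F (A + 1 + int j) = int n + 1 - (-1)^nat (a+1) * d * (2*int j - (a+1))"
      using xC_A[of a m n "int j" "A + 1 + int j" d] a0 mn A2 unfolding a_def by (simp add: algebra_simps)
    moreover have "nat (a+1) = Suc k" unfolding a_def by simp
    ultimately show "?F (A + 1 + int j) = int n + 1 + (-1)^k * d * (2*int j - (a+1))" by simp
  qed
  have ak: "nat (a+1) = Suc k" "int (Suc k) = a + 1" unfolding a_def by auto
  from sgn_cases[OF dd, of k] show ?case
  proof
    assume e: "(-1)^k * d = 1"
    have sg: "map ?F [A+1..A+1+int (Suc k)] = swp (int n+1-a) (-1) 1 (Suc k)"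
      by (rule seg) (use Fj[unfolded e] in \<open>simp add: algebra_simps\<close>)
    have st: "legal_seq ?L (shp ?L (int n+1-a) a True Black White) (swp (int n+1-a) (-1) 1 (Suc k))
      \<and> run_moves ?L (shp ?L (int n+1-a) a True Black White) (swp (int n+1-a) (-1) 1 (Suc k)) = shp ?L (int n+1-a-1) (a+1) False Black White"
      using stA_vl[of "int n+1-a" a ?L] a0 mn unfolding ak by simp
    have e2: "\<not> ((-1)^Suc k * d = 1)" using e by simp
    have R: "legal_seq ?L (init_conf n m) (map ?F [1..A+1+int (Suc k)]) \<and> run_moves ?L (init_conf n m) (map ?F [1..A+1+int (Suc k)])
      = shp ?L (int n+1-a-1) (a+1) False Black White"
      by (rule step[OF _ _ A0 sg]) (use IH st e in auto)
    show ?case unfolding idx using R e2 by (simp add: ak a_def add.commute)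
  next
    assume e: "(-1)^k * d = -1"
    have sg: "map ?F [A+1..A+1+int (Suc k)] = swp (int n+1-a + 2*a) 1 (-1) (Suc k)"
      by (rule seg) (use Fj[unfolded e] in \<open>simp add: algebra_simps\<close>)
    have st: "legal_seq ?L (shp ?L (int n+1-a) a False Black White) (swp (int n+1-a+2*a) 1 (-1) (Suc k))
      \<and> run_moves ?L (shp ?L (int n+1-a) a False Black White) (swp (int n+1-a+2*a) 1 (-1) (Suc k)) = shp ?L (int n+1-a-1) (a+1) True Black White"
      using stA_nvl[of "int n+1-a" a ?L] a0 mn unfolding ak by simp
    have e2: "(-1)^Suc k * d = 1" using e by simp
    have e3: "\<not> ((-1)^k * d = 1)" using e by simp
    have R: "legal_seq ?L (init_conf n m) (map ?F [1..A+1+int (Suc k)]) \<and> run_moves ?L (init_conf n m) (map ?F [1..A+1+int (Suc k)])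
      = shp ?L (int n+1-a-1) (a+1) True Black White"
      by (rule step[OF _ _ A0 sg]) (use IH st e3 in auto)
    show ?case unfolding idx using R e2 by (simp add: ak a_def add.commute)
  qed
qed

lemma shp_suffix: "b0 + 2*k = L \<Longrightarrow> shp L b0 k vl X Y = shp L b0 k vl X Y'"
  unfolding shp_def fun_eq_iff by auto

lemma shp_prefix: "b0 = 1 \<Longrightarrow> shp L b0 k vl X Y = shp L b0 k vl X' Y"
  unfolding shp_def fun_eq_iff by auto

lemma neg1sq: "(-1::int)^k * (-1)^k = 1"
  by (metis power_add power_even_eq minus_one_power_iff even_add mult_2 power_mult power_one)

lemma stageB:
  assumes m1: "1 \<le> m" and mn: "m \<le> n" and dd: "d = 1 \<or> d = -1"
  shows "b \<le> n - m \<Longrightarrow> legal_seq (int n + int m + 1) (init_conf n m) (map (xC n m d) [1..s1 m + int b*(int m+1)])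
     \<and> run_moves (int n + int m + 1) (init_conf n m) (map (xC n m d) [1..s1 m + int b*(int m+1)])
        = shp (int n + int m + 1) (int n+1-int m-int b) (int m) ((-1)^b * ((-1)^m * d) = 1) Black Black"
proof (induction b)
  case 0
  have "s1 m = int m * (int m + 3) div 2" unfolding s1_def by simp
  then show ?case using stageA[OF m1 mn dd, of m] shp_suffix[of "int n + 1 - int m" "int m" "int n + int m + 1"]
    by simp
next
  case (Suc b)
  let ?L = "int n + int m + 1"
  let ?F = "xC n m d"
  define A where "A = s1 m + int b*(int m+1)"
  define em where "em = (-1::int)^m * d"
  define P where "P = (-1::int)^b"
  have P1: "P = 1 \<or> P = -1" unfolding P_def by (cases "even b") auto
  have em1: "em = 1 \<or> em = -1" unfolding em_def using sgn_cases[OF dd] by auto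
  have b0: "int b + 1 \<le> int n - int m" using Suc.prems by auto
  have A0: "0 \<le> A"
  proof -
    have "0 \<le> int m * (int m + 3)" by simp
    then have "0 \<le> s1 m" using s1_2[of m] by linarith
    moreover have "0 \<le> int b * (int m + 1)" by simp
    ultimately show ?thesis unfolding A_def by simp
  qed
  have IH: "legal_seq ?L (init_conf n m) (map ?F [1..A]) \<and> run_moves ?L (init_conf n m) (map ?F [1..A])
        = shp ?L (int n+1-int m-int b) (int m) (P * em = 1) Black Black"
    using Suc unfolding A_def P_def em_def by simp
  have idx: "s1 m + int (Suc b) * (int m+1) = A + 1 + int m" unfolding A_def by (simp add: algebra_simps)
  have Fj: "\<And>j. j \<le> m \<Longrightarrow> ?F (A + 1 + int j) = int n + 1 - em * int m - (int b + 1) + P * em * (2*int j - int m * (1 - P))"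
  proof -
    fix j assume j: "j \<le> m"
    have h: "?F (A + 1 + int j) = xA n d (s1 m) - (int b + 1) - (-1)^nat (int m + (int b+1)) * d * (2*(int j+1) - 2 - int m * (1 + (-1)^nat (int b + 1)))"
      by (rule xC_B) (use j m1 mn b0 in \<open>auto simp: A_def algebra_simps\<close>)
    have n1: "nat (int m + (int b+1)) = m + Suc b" "nat (int b + 1) = Suc b" by auto
    have s1': "(-1::int)^(m + Suc b) * d = - (P * em)" unfolding P_def em_def by (simp add: power_add)
    have s2': "(-1::int)^(Suc b) = - P" unfolding P_def by simp
    have s3': "(-1::int)^m * d = em" unfolding em_def ..
    have "xA n d (s1 m) = int n + 1 - em * int m" unfolding xA_s1 s3'[symmetric] by simp
    then show "?F (A + 1 + int j) = int n + 1 - em * int m - (int b + 1) + P * em * (2*int j - int m * (1 - P))"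
      using h[unfolded n1 s1' s2'] by (simp add: algebra_simps)
  qed
  have PP: "P * P = 1" unfolding P_def by (rule neg1sq)
  have ak: "nat (int m) = m" by simp
  from P1 em1 consider "P * em = 1" | "P * em = -1" by auto
  then show ?case
  proof cases
    case 1
    then have emP: "em = P" using P1 by auto
    have sg: "map ?F [A+1..A+1+int m] = swp (int n+1-int m-int b) (-1) 1 m"
    proof (rule seg)
      fix j assume "j \<le> m"
      then show "?F (A + 1 + int j) = int n + 1 - int m - int b + - 1 + 2 * 1 * int j"
        using Fj[of j] 1 PP unfolding emP by (simp add: algebra_simps)
    qed
    have st: "legal_seq ?L (shp ?L (int n+1-int m-int b) (int m) True Black Black) (swp (int n+1-int m-int b) (-1) 1 m)
      \<and> run_moves ?L (shp ?L (int n+1-int m-int b) (int m) True Black Black) (swp (int n+1-int m-int b) (-1) 1 m)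
         = shp ?L (int n+1-int m-int b-1) (int m) False Black Black"
      using stB_vl[of "int n+1-int m-int b" "int m" ?L] b0 unfolding ak by simp
    have R: "legal_seq ?L (init_conf n m) (map ?F [1..A+1+int m]) \<and> run_moves ?L (init_conf n m) (map ?F [1..A+1+int m])
      = shp ?L (int n+1-int m-int b-1) (int m) False Black Black"
      by (rule step[OF _ _ A0 sg]) (use IH st 1 in auto)
    have e2: "\<not> ((-1)^Suc b * ((-1)^m * d) = (1::int))" using 1 unfolding P_def em_def by simp
    show ?thesis unfolding idx using R e2 by (simp add: algebra_simps)
  next
    case 2
    then have emP: "em = - P" using P1 by auto
    have sg: "map ?F [A+1..A+1+int m] = swp (int n+1-int m-int b + 2*int m) (-1) (-1) m"
    proof (rule seg)
      fix j assume "j \<le> m"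
      then show "?F (A + 1 + int j) = int n + 1 - int m - int b + 2 * int m + - 1 + 2 * - 1 * int j"
        using Fj[of j] 2 PP unfolding emP by (simp add: algebra_simps)
    qed
    have st: "legal_seq ?L (shp ?L (int n+1-int m-int b) (int m) False Black Black) (swp (int n+1-int m-int b + 2*int m) (-1) (-1) m)
      \<and> run_moves ?L (shp ?L (int n+1-int m-int b) (int m) False Black Black) (swp (int n+1-int m-int b + 2*int m) (-1) (-1) m)
         = shp ?L (int n+1-int m-int b-1) (int m) True Black Black"
      using stB_nvl[of "int n+1-int m-int b" "int m" ?L] b0 unfolding ak by simp
    have R: "legal_seq ?L (init_conf n m) (map ?F [1..A+1+int m]) \<and> run_moves ?L (init_conf n m) (map ?F [1..A+1+int m])
      = shp ?L (int n+1-int m-int b-1) (int m) True Black Black"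
      by (rule step[OF _ _ A0 sg]) (use IH st 2 in auto)
    have e2: "(-1)^Suc b * ((-1)^m * d) = (1::int)" using 2 unfolding P_def em_def by simp
    show ?thesis unfolding idx using R e2 by (simp add: algebra_simps)
  qed
qed

lemma xB_end:
  assumes m1: "1 \<le> m" and mn: "m \<le> n"
  shows "xB n m d (s1 m + s2 n m) = int m + 1 - (-1)^n * d * int m"
proof (cases "n = m")
  case True
  then have "s2 n m = 0" unfolding s2_def by simp
  then show ?thesis unfolding xB_def using xA_s1[of n d m] True by simp
next
  case False
  then have nm: "int m + 1 \<le> int n" using mn by simp
  have le: "s1 m + s2 n m \<le> s1 m + s2 n m" by simp
  have "xC n m d (s1 m + s2 n m) = xA n d (s1 m) - (int n - int m) - (-1)^nat (int m + (int n - int m)) * d * (2*(int m+1) - 2 - int m * (1 + (-1)^nat (int n - int m)))"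
    by (rule xC_B) (use m1 nm in \<open>auto simp: s2_def algebra_simps\<close>)
  moreover have "xC n m d (s1 m + s2 n m) = xB n m d (s1 m + s2 n m)" unfolding xC_def by simp
  moreover have "nat (int m + (int n - int m)) = n" "nat (int n - int m) = n - m" using mn by auto
  moreover have "(-1::int)^n = (-1)^m * (-1)^(n-m)"
    using mn by (metis le_add_diff_inverse power_add)
  moreover have "(-1::int)^(n-m) * (-1)^(n-m) = 1" by (rule neg1sq)
  ultimately show ?thesis unfolding xA_s1 by (simp add: algebra_simps)
qed

lemma stageC:
  assumes m1: "1 \<le> m" and mn: "m \<le> n" and dd: "d = 1 \<or> d = -1"
  shows "c \<le> m \<Longrightarrow> legal_seq (int n + int m + 1) (init_conf n m) (map (xC n m d) [1..s1 m + s2 n m + int c*(int m+1) - int c*(int c+1) div 2])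
     \<and> run_moves (int n + int m + 1) (init_conf n m) (map (xC n m d) [1..s1 m + s2 n m + int c*(int m+1) - int c*(int c+1) div 2])
        = shp (int n + int m + 1) (1 + int c) (int m - int c) ((-1)^c * ((-1)^n * d) = 1) White Black"
proof (induction c)
  case 0
  have e: "s1 m + s2 n m = s1 m + int (n-m) * (int m + 1)" unfolding s2_def using mn by simp
  have p: "(-1::int)^(n-m) * (-1)^m = (-1)^n" using mn by (simp add: power_add[symmetric])
  have sg: "(-1::int)^(n-m) * ((-1)^m * d) = (-1)^n * d" by (metis mult.assoc p)
  have sh: "shp (int n + int m + 1) 1 (int m) ((-1::int)^n * d = 1) Black Black = shp (int n + int m + 1) 1 (int m) ((-1::int)^n * d = 1) White Black"
    by (rule shp_prefix) simp
  have "int n + 1 - int m - int (n - m) = 1" using mn by simp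
  then show ?case using stageB[OF m1 mn dd, of "n-m"] sh unfolding e sg
    by simp
next
  case (Suc c)
  let ?L = "int n + int m + 1"
  let ?F = "xC n m d"
  define A where "A = s1 m + s2 n m + int c*(int m+1) - int c*(int c+1) div 2"
  define G where "G = (-1::int)^n * d"
  define Q where "Q = (-1::int)^c"
  have Q1: "Q = 1 \<or> Q = -1" unfolding Q_def by (cases "even c") auto
  have G1: "G = 1 \<or> G = -1" unfolding G_def using sgn_cases[OF dd] by auto
  have c0: "int c + 1 \<le> int m" using Suc.prems by auto
  have ev: "2 * (int c*(int c+1) div 2) = int c*(int c+1)" by simp
  have A2: "2 * (A - s1 m - s2 n m) = 2 * int c * (int m + 1) - int c * (int c + 1)"
    unfolding A_def using ev by (simp add: algebra_simps)
  have A0: "0 \<le> A"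
  proof -
    have "0 \<le> int m * (int m + 3)" by simp
    then have "0 \<le> s1 m" using s1_2[of m] by linarith
    moreover have "0 \<le> s2 n m" unfolding s2_def using mn by simp
    moreover have "0 \<le> int c * (2*int m + 2 - int c - 1)" using c0 by simp
    ultimately show ?thesis using A2 by (simp add: algebra_simps)
  qed
  have IH: "legal_seq ?L (init_conf n m) (map ?F [1..A]) \<and> run_moves ?L (init_conf n m) (map ?F [1..A])
        = shp ?L (1 + int c) (int m - int c) (Q * G = 1) White Black"
    using Suc unfolding A_def Q_def G_def by simp
  have idx: "s1 m + s2 n m + int (Suc c)*(int m+1) - int (Suc c)*(int (Suc c)+1) div 2 = A + 1 + int (m - Suc c)"
  proof -
    have ev2: "2 * (int (Suc c)*(int (Suc c)+1) div 2) = int (Suc c)*(int (Suc c)+1)" by simp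
    have "2 * (s1 m + s2 n m + int (Suc c)*(int m+1) - int (Suc c)*(int (Suc c)+1) div 2) = 2 * (A + 1 + int (m - Suc c))"
      using A2 ev2 c0 by (simp add: algebra_simps of_nat_diff)
    then show ?thesis by simp
  qed
  have Fj: "\<And>j. j \<le> m - Suc c \<Longrightarrow> ?F (A + 1 + int j) = int m + 1 + Q * G * (int c + 1 + 2 * int j - int m)"
  proof -
    fix j assume j: "j \<le> m - Suc c"
    have h: "?F (A + 1 + int j) = xB n m d (s1 m + s2 n m) - d * ((-1)^nat (int n + (int c+1)) * ((int c+1) + 2*(int j+1) - int m - 2) - int m * (-1)^n)"
      by (rule xC_C) (use j m1 mn c0 A2 in \<open>auto simp: algebra_simps\<close>)
    have n1: "nat (int n + (int c+1)) = n + Suc c" by auto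
    have s1': "d * (-1::int)^(n + Suc c) = - (Q * G)" unfolding Q_def G_def by (simp add: power_add)
    have "?F (A + 1 + int j) = xB n m d (s1 m + s2 n m) - d * (-1::int)^(n + Suc c) * ((int c+1) + 2*(int j+1) - int m - 2) + int m * (d * (-1)^n)"
      using h[unfolded n1] by (simp add: algebra_simps)
    also have "\<dots> = int m + 1 - G * int m + Q * G * ((int c+1) + 2*(int j+1) - int m - 2) + int m * G"
      unfolding s1' xB_end[OF m1 mn] G_def by (simp add: algebra_simps)
    finally show "?F (A + 1 + int j) = int m + 1 + Q * G * (int c + 1 + 2 * int j - int m)"
      by (simp add: algebra_simps)
  qed
  have ak: "nat (int m - int c - 1) = m - Suc c" "int m - int (Suc c) = int m - int c - 1" using c0 by auto
  from Q1 G1 consider "Q * G = 1" | "Q * G = -1" by auto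
  then show ?case
  proof cases
    case 1
    have sg: "map ?F [A+1..A+1+int (m - Suc c)] = swp (1 + int c) 1 1 (m - Suc c)"
    proof (rule seg)
      fix j assume "j \<le> m - Suc c"
      then show "?F (A + 1 + int j) = 1 + int c + 1 + 2 * 1 * int j"
        using Fj[of j, unfolded 1] by (simp add: algebra_simps)
    qed
    have st: "legal_seq ?L (shp ?L (1 + int c) (int m - int c) True White Black) (swp (1 + int c) 1 1 (m - Suc c))
      \<and> run_moves ?L (shp ?L (1 + int c) (int m - int c) True White Black) (swp (1 + int c) 1 1 (m - Suc c))
         = shp ?L (1 + int c + 1) (int m - int c - 1) False White Black"
      using stC_vl[of "1 + int c" "int m - int c" ?L] c0 mn unfolding ak by simp
    have R: "legal_seq ?L (init_conf n m) (map ?F [1..A+1+int (m - Suc c)]) \<and> run_moves ?L (init_conf n m) (map ?F [1..A+1+int (m - Suc c)])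
      = shp ?L (1 + int c + 1) (int m - int c - 1) False White Black"
      by (rule step[OF _ _ A0 sg]) (use IH st 1 in auto)
    have e2: "\<not> ((-1)^Suc c * ((-1)^n * d) = (1::int))" using 1 unfolding Q_def G_def by simp
    show ?thesis unfolding idx using R e2 c0 by (simp add: algebra_simps)
  next
    case 2
    have sg: "map ?F [A+1..A+1+int (m - Suc c)] = swp (1 + int c + 2*(int m - int c)) (-1) (-1) (m - Suc c)"
    proof (rule seg)
      fix j assume "j \<le> m - Suc c"
      then show "?F (A + 1 + int j) = 1 + int c + 2*(int m - int c) + - 1 + 2 * - 1 * int j"
        using Fj[of j, unfolded 2] by (simp add: algebra_simps)
    qed
    have st: "legal_seq ?L (shp ?L (1 + int c) (int m - int c) False White Black) (swp (1 + int c + 2*(int m - int c)) (-1) (-1) (m - Suc c))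
      \<and> run_moves ?L (shp ?L (1 + int c) (int m - int c) False White Black) (swp (1 + int c + 2*(int m - int c)) (-1) (-1) (m - Suc c))
         = shp ?L (1 + int c + 1) (int m - int c - 1) True White Black"
      using stC_nvl[of "1 + int c" "int m - int c" ?L] c0 mn unfolding ak by simp
    have R: "legal_seq ?L (init_conf n m) (map ?F [1..A+1+int (m - Suc c)]) \<and> run_moves ?L (init_conf n m) (map ?F [1..A+1+int (m - Suc c)])
      = shp ?L (1 + int c + 1) (int m - int c - 1) True White Black"
      by (rule step[OF _ _ A0 sg]) (use IH st 2 in auto)
    have e2: "(-1)^Suc c * ((-1)^n * d) = (1::int)" using 2 unfolding Q_def G_def by simp
    show ?thesis unfolding idx using R e2 c0 by (simp add: algebra_simps)
  qed
qed

lemma construction: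
  assumes m1: "1 \<le> m" and mn: "m \<le> n" and dd: "d = 1 \<or> d = -1"
  shows "legal_seq (int n + int m + 1) (init_conf n m) (move_seq n m d)
     \<and> run_moves (int n + int m + 1) (init_conf n m) (move_seq n m d) = final_conf n m"
proof -
  have idx: "s1 m + s2 n m + int m*(int m+1) - int m*(int m+1) div 2 = int (n * m + n + m)"
  proof -
    have ev: "2 * (int m*(int m+1) div 2) = int m*(int m+1)" by simp
    have "2 * (s1 m + s2 n m + int m*(int m+1) - int m*(int m+1) div 2) = 2 * int (n * m + n + m)"
      using ev s1_2[of m] unfolding s2_def by (simp add: algebra_simps)
    then show ?thesis by simp
  qed
  have f: "shp (int n + int m + 1) (1 + int m) (int m - int m) vl White Black = final_conf n m" for vl
    using final_shp[of n m vl] by (simp add: add.commute)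
  show ?thesis using stageC[OF m1 mn dd, of m] f unfolding idx move_seq_def by simp
qed

lemma hd_move:
  assumes m1: "1 \<le> m" and mn: "m \<le> n"
  shows "hd (move_seq n m d) = int n + 1 - d"
proof -
  have "[1..int (n * m + n + m)] = 1 # [1+1..int (n * m + n + m)]" using m1 by (intro upto_rec1) (simp add: mult_nonneg_nonneg add_increasing)
  then have "hd (move_seq n m d) = xC n m d 1" unfolding move_seq_def by simp
  also have "\<dots> = int n + 1 - (-1)^nat (0+1) * d * (2*0 - (0+1))"
    by (rule xC_A) (use m1 mn in auto)
  finally show ?thesis by simp
qed

fun wt :: "cell \<Rightarrow> int" where
  "wt Black = 1" | "wt White = -1" | "wt Empty = 0"

definition phi :: "int \<Rightarrow> config \<Rightarrow> int" where
  "phi L c = (\<Sum>p\<in>{1..L}. wt (c p) * p)"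

definition lt :: "config \<Rightarrow> int \<Rightarrow> int \<Rightarrow> cell" where
  "lt c v i = c (if i < v then i else i + 1)"

definition isMax :: "(int \<Rightarrow> cell) \<Rightarrow> cell \<Rightarrow> int \<Rightarrow> int \<Rightarrow> bool" where
  "isMax f col N M \<longleftrightarrow> 1 \<le> M \<and> M \<le> N \<and> f M = col \<and> (\<forall>i. M < i \<and> i \<le> N \<longrightarrow> f i \<noteq> col)"

definition mx :: "(int \<Rightarrow> cell) \<Rightarrow> cell \<Rightarrow> int \<Rightarrow> int" where
  "mx f col N = Max {i. 1 \<le> i \<and> i \<le> N \<and> f i = col}"

definition upI :: "int \<Rightarrow> int \<Rightarrow> int \<Rightarrow> int" where
  "upI k N i = (if odd (i - k) \<and> i < N then i + 1 else i)"

definition qq :: "int \<Rightarrow> config \<Rightarrow> int \<Rightarrow> int" where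
  "qq L c v = upI (v-1) (L-1) (mx (lt c v) Black (L-1)) - upI (v-1) (L-1) (mx (lt c v) White (L-1))"

definition good :: "int \<Rightarrow> config \<Rightarrow> int \<Rightarrow> bool" where
  "good L c v \<longleftrightarrow> cwf L c v \<and> (\<exists>i. 1 \<le> i \<and> i \<le> L-1 \<and> lt c v i = Black) \<and> (\<exists>i. 1 \<le> i \<and> i \<le> L-1 \<and> lt c v i = White)"

lemma isMax_mx: "isMax f col N M \<Longrightarrow> mx f col N = M"
proof -
  assume h: "isMax f col N M"
  have fin: "finite {i. 1 \<le> i \<and> i \<le> N \<and> f i = col}" by (rule finite_subset[of _ "{1..N}"]) auto
  show ?thesis unfolding mx_def
  proof (rule Max_eqI[OF fin])
    show "M \<in> {i. 1 \<le> i \<and> i \<le> N \<and> f i = col}" using h unfolding isMax_def by auto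
    fix y assume "y \<in> {i. 1 \<le> i \<and> i \<le> N \<and> f i = col}"
    then show "y \<le> M" using h unfolding isMax_def by (metis (mono_tags, lifting) mem_Collect_eq not_le)
  qed
qed

lemma mx_isMax: "\<exists>i. 1 \<le> i \<and> i \<le> N \<and> f i = col \<Longrightarrow> isMax f col N (mx f col N)"
proof -
  assume h: "\<exists>i. 1 \<le> i \<and> i \<le> N \<and> f i = col"
  define S where "S = {i. 1 \<le> i \<and> i \<le> N \<and> f i = col}"
  have fin: "finite S" unfolding S_def by (rule finite_subset[of _ "{1..N}"]) auto
  have ne: "S \<noteq> {}" using h unfolding S_def by auto
  define M where "M = Max S"
  have inS: "M \<in> S" unfolding M_def using Max_in[OF fin ne] .
  have ge: "\<And>i. i \<in> S \<Longrightarrow> i \<le> M" unfolding M_def using Max_ge[OF fin] by blast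
  have M1: "1 \<le> M" "M \<le> N" "f M = col" using inS unfolding S_def by auto
  have "\<forall>i. M < i \<and> i \<le> N \<longrightarrow> f i \<noteq> col"
  proof (intro allI impI notI)
    fix i assume i: "M < i \<and> i \<le> N" "f i = col"
    then have "i \<in> S" using M1 unfolding S_def by simp
    then show False using ge[of i] i by simp
  qed
  moreover have "mx f col N = M" unfolding mx_def M_def S_def ..
  ultimately show ?thesis using M1 unfolding isMax_def by simp
qed

definition sw :: "int \<Rightarrow> int \<Rightarrow> int" where
  "sw a i = (if i = a then a + 1 else if i = a + 1 then a else i)"

lemma max_swap:
  assumes M: "isMax f col N M" and a: "1 \<le> a" "a + 1 \<le> N"
    and u: "u a = u (a+1)" "u' a = u a" "u' (a+1) = u a" "\<And>i. i \<noteq> a \<Longrightarrow> i \<noteq> a+1 \<Longrightarrow> u' i = u i"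
  shows "\<exists>M'. isMax (\<lambda>i. f (sw a i)) col N M' \<and> u' M' = u M"
proof -
  have Mp: "1 \<le> M" "M \<le> N" "f M = col" "\<And>i. M < i \<Longrightarrow> i \<le> N \<Longrightarrow> f i \<noteq> col" using M unfolding isMax_def by auto
  consider "M > a + 1" | "M < a" | "M = a" | "M = a + 1" by linarith
  then show ?thesis
  proof cases
    case 1
    then have "isMax (\<lambda>i. f (sw a i)) col N M" using Mp unfolding isMax_def sw_def by auto
    then show ?thesis using u(4)[of M] 1 by auto
  next
    case 2
    then have "isMax (\<lambda>i. f (sw a i)) col N M" using Mp a unfolding isMax_def sw_def by auto
    then show ?thesis using u(4)[of M] 2 by auto
  next
    case 3
    then have "isMax (\<lambda>i. f (sw a i)) col N (a+1)" using Mp a unfolding isMax_def sw_def by auto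
    then show ?thesis using u 3 by auto
  next
    case 4
    show ?thesis
    proof (cases "f a = col")
      case True
      then have "isMax (\<lambda>i. f (sw a i)) col N (a+1)" using Mp a 4 unfolding isMax_def sw_def by auto
      then show ?thesis using u 4 by auto
    next
      case False
      then have "isMax (\<lambda>i. f (sw a i)) col N a" using Mp a 4 unfolding isMax_def sw_def by auto
      then show ?thesis using u 4 by auto
    qed
  qed
qed

lemma ap_eq: "cwf L c v \<Longrightarrow> 1 \<le> x \<Longrightarrow> x \<le> L \<Longrightarrow> x \<noteq> v \<Longrightarrow> apply_move L c x = (c(v := c x))(x := Empty)"
  using wf_apply(2) by blast

lemma lt_slide_l: "cwf L c v \<Longrightarrow> 1 \<le> v - 1 \<Longrightarrow> lt (apply_move L c (v-1)) (v-1) = lt c v"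
  by (subst ap_eq[of L c v]) (auto simp: cwf_def lt_def fun_eq_iff)

lemma lt_slide_r: "cwf L c v \<Longrightarrow> v + 1 \<le> L \<Longrightarrow> lt (apply_move L c (v+1)) (v+1) = lt c v"
  by (subst ap_eq[of L c v]) (auto simp: cwf_def lt_def fun_eq_iff)

lemma lt_jump_l: "cwf L c v \<Longrightarrow> 1 \<le> v - 2 \<Longrightarrow> lt (apply_move L c (v-2)) (v-2) = (\<lambda>i. lt c v (sw (v-2) i))"
  by (subst ap_eq[of L c v]) (auto simp: cwf_def lt_def fun_eq_iff sw_def)

lemma lt_jump_r: "cwf L c v \<Longrightarrow> v + 2 \<le> L \<Longrightarrow> lt (apply_move L c (v+2)) (v+2) = (\<lambda>i. lt c v (sw v i))"
  by (subst ap_eq[of L c v]) (auto simp: cwf_def lt_def fun_eq_iff sw_def add.commute)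

lemma phi_move:
  assumes "cwf L c v" "1 \<le> x" "x \<le> L" "x \<noteq> v"
  shows "phi L (apply_move L c x) = phi L c + wt (c x) * (v - x)"
proof -
  have cv: "c v = Empty" "1 \<le> v" "v \<le> L" using assms(1) unfolding cwf_def by auto
  have "phi L (apply_move L c x) = (\<Sum>p\<in>{1..L}. wt (c p) * p + (if p = v then wt (c x) * v else 0) - (if p = x then wt (c x) * x else 0))"
    unfolding phi_def ap_eq[OF assms] by (rule sum.cong) (use cv assms(4) in auto)
  also have "\<dots> = phi L c + wt (c x) * v - wt (c x) * x"
    unfolding phi_def sum.distrib sum_subtractf using cv assms by (simp add: sum.delta)
  finally show ?thesis by (simp add: algebra_simps)
qed

lemma wt_bound: "wt z * (v - x) \<le> \<bar>v - x\<bar>"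
  by (cases z) auto

lemma lt_ne: "cwf L c v \<Longrightarrow> 1 \<le> i \<Longrightarrow> i \<le> L - 1 \<Longrightarrow> lt c v i \<noteq> Empty"
  unfolding cwf_def lt_def by auto

lemma upI_cases: "upI k N i = i \<or> (upI k N i = i + 1 \<and> i < N)"
  unfolding upI_def by auto

lemma slide_q:
  assumes w: "\<And>i. 1 \<le> i \<Longrightarrow> i \<le> N \<Longrightarrow> f i \<noteq> Empty"
    and B: "isMax f Black N MB" and W: "isMax f White N MW"
  shows "(upI k' N MB - upI k N MB) - (upI k' N MW - upI k N MW) \<le> 1"
proof -
  have nb: "upI k' N MB = MB + 1 \<Longrightarrow> upI k N MW = MW + 1 \<Longrightarrow> False"
  proof -
    assume h1: "upI k' N MB = MB + 1" and h2: "upI k N MW = MW + 1"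
    have "MB < N" using h1 upI_cases[of k' N MB] by auto
    have "MW < N" using h2 upI_cases[of k N MW] by auto
    have "f (MB+1) \<noteq> Black" using B \<open>MB < N\<close> unfolding isMax_def by auto
    moreover have "f (MB+1) \<noteq> Empty" using w[of "MB+1"] B \<open>MB < N\<close> unfolding isMax_def by auto
    ultimately have "f (MB+1) = White" by (cases "f (MB+1)") auto
    then have "MB + 1 \<le> MW" using W \<open>MB < N\<close> unfolding isMax_def by (metis not_le zless_imp_add1_zle)
    have "f (MW+1) \<noteq> White" using W \<open>MW < N\<close> unfolding isMax_def by auto
    moreover have "f (MW+1) \<noteq> Empty" using w[of "MW+1"] W \<open>MW < N\<close> unfolding isMax_def by auto
    ultimately have "f (MW+1) = Black" by (cases "f (MW+1)") auto
    then have "MW + 1 \<le> MB" using B \<open>MW < N\<close> unfolding isMax_def by (metis not_le zless_imp_add1_zle)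
    then show False using \<open>MB + 1 \<le> MW\<close> by simp
  qed
  show ?thesis using nb upI_cases[of k' N MB] upI_cases[of k N MB] upI_cases[of k' N MW] upI_cases[of k N MW]
    by auto
qed

lemma jump_q:
  assumes M: "isMax f col N M" and a: "1 \<le> a" "a + 1 \<le> N"
    and u: "u a = u (a+1)" "u' a = u a" "u' (a+1) = u a" "\<And>i. i \<noteq> a \<Longrightarrow> i \<noteq> a+1 \<Longrightarrow> u' i = u i"
  shows "u' (mx (\<lambda>i. f (sw a i)) col N) = u (mx f col N)"
proof -
  obtain M' where "isMax (\<lambda>i. f (sw a i)) col N M'" "u' M' = u M" using max_swap[OF M a u] by blast
  then show ?thesis using isMax_mx M by metis
qed

lemma good_isMax:
  assumes "good L c v"
  shows "isMax (lt c v) Black (L-1) (mx (lt c v) Black (L-1))" "isMax (lt c v) White (L-1) (mx (lt c v) White (L-1))"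
  using assms mx_isMax unfolding good_def by blast+

lemma move_step:
  assumes g: "good L c v" and lm: "legal_move L c x"
  shows "good L (apply_move L c x) x \<and> phi L (apply_move L c x) + qq L (apply_move L c x) x \<le> phi L c + qq L c v + 2"
proof -
  have w: "cwf L c v" using g unfolding good_def by simp
  have vac: "vacancy L c = v" using wf_vac[OF w] .
  have x: "1 \<le> x" "x \<le> L" "\<bar>x - v\<bar> = 1 \<or> \<bar>x - v\<bar> = 2" using lm unfolding legal_move_def Let_def vac by auto
  have xv: "x \<noteq> v" using x by auto
  have v: "1 \<le> v" "v \<le> L" using w unfolding cwf_def by auto
  let ?c = "apply_move L c x"
  have w': "cwf L ?c x" using wf_apply(1)[OF w x(1,2) xv] .
  have ph: "phi L ?c \<le> phi L c + \<bar>v - x\<bar>" using phi_move[OF w x(1,2) xv] wt_bound by simp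
  have MB: "isMax (lt c v) Black (L-1) (mx (lt c v) Black (L-1))"
   and MW: "isMax (lt c v) White (L-1) (mx (lt c v) White (L-1))" using good_isMax[OF g] by auto
  have exB: "\<exists>i. 1 \<le> i \<and> i \<le> L-1 \<and> lt c v i = Black" and exW: "\<exists>i. 1 \<le> i \<and> i \<le> L-1 \<and> lt c v i = White"
    using g unfolding good_def by auto
  consider "x = v - 1" | "x = v + 1" | "x = v - 2" | "x = v + 2" using x(3) by linarith
  then show ?thesis
  proof cases
    case 1
    have l: "lt ?c x = lt c v" unfolding 1 using lt_slide_l[OF w] x 1 by simp
    have q: "qq L ?c x - qq L c v \<le> 1"
      unfolding qq_def l using slide_q[OF lt_ne[OF w] MB MW, of "x-1" "v-1"] by simp
    have "good L ?c x" unfolding good_def l using w' exB exW by simp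
    then show ?thesis using ph q 1 by simp
  next
    case 2
    have l: "lt ?c x = lt c v" unfolding 2 using lt_slide_r[OF w] x 2 by simp
    have q: "qq L ?c x - qq L c v \<le> 1"
      unfolding qq_def l using slide_q[OF lt_ne[OF w] MB MW, of "x-1" "v-1"] by simp
    have "good L ?c x" unfolding good_def l using w' exB exW by simp
    then show ?thesis using ph q 2 by simp
  next
    case 3
    have l: "lt ?c x = (\<lambda>i. lt c v (sw (v-2) i))" unfolding 3 using lt_jump_l[OF w] x 3 by simp
    have ua: "upI (v-1) (L-1) (v-2) = upI (v-1) (L-1) (v-2+1)" "upI (x-1) (L-1) (v-2) = upI (v-1) (L-1) (v-2)"
      "upI (x-1) (L-1) (v-2+1) = upI (v-1) (L-1) (v-2)" "\<And>i. upI (x-1) (L-1) i = upI (v-1) (L-1) i"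
      using 3 v x by (auto simp: upI_def)
    have q: "qq L ?c x = qq L c v"
      unfolding qq_def l
      using jump_q[OF MB _ _ ua] jump_q[OF MW _ _ ua] x 3 v by simp
    have "good L ?c x" unfolding good_def l
    proof (intro conjI w')
      obtain i where i: "1 \<le> i" "i \<le> L-1" "lt c v i = Black" using exB by blast
      then show "\<exists>i. 1 \<le> i \<and> i \<le> L-1 \<and> lt c v (sw (v-2) i) = Black" using x 3 v
        by (intro exI[of _ "sw (v-2) i"]) (auto simp: sw_def)
      obtain i where i: "1 \<le> i" "i \<le> L-1" "lt c v i = White" using exW by blast
      then show "\<exists>i. 1 \<le> i \<and> i \<le> L-1 \<and> lt c v (sw (v-2) i) = White" using x 3 v
        by (intro exI[of _ "sw (v-2) i"]) (auto simp: sw_def)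
    qed
    then show ?thesis using ph q 3 by simp
  next
    case 4
    have l: "lt ?c x = (\<lambda>i. lt c v (sw v i))" unfolding 4 using lt_jump_r[OF w] x 4 by simp
    have ua: "upI (v-1) (L-1) v = upI (v-1) (L-1) (v+1)" "upI (x-1) (L-1) v = upI (v-1) (L-1) v"
      "upI (x-1) (L-1) (v+1) = upI (v-1) (L-1) v" "\<And>i. upI (x-1) (L-1) i = upI (v-1) (L-1) i"
      using 4 v x by (auto simp: upI_def)
    have q: "qq L ?c x = qq L c v"
      unfolding qq_def l
      using jump_q[OF MB _ _ ua] jump_q[OF MW _ _ ua] x 4 v by simp
    have "good L ?c x" unfolding good_def l
    proof (intro conjI w')
      obtain i where i: "1 \<le> i" "i \<le> L-1" "lt c v i = Black" using exB by blast
      then show "\<exists>i. 1 \<le> i \<and> i \<le> L-1 \<and> lt c v (sw v i) = Black" using x 4 v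
        by (intro exI[of _ "sw v i"]) (auto simp: sw_def)
      obtain i where i: "1 \<le> i" "i \<le> L-1" "lt c v i = White" using exW by blast
      then show "\<exists>i. 1 \<le> i \<and> i \<le> L-1 \<and> lt c v (sw v i) = White" using x 4 v
        by (intro exI[of _ "sw v i"]) (auto simp: sw_def)
    qed
    then show ?thesis using ph q 4 by simp
  qed
qed

lemma chain: "good L c v \<Longrightarrow> legal_seq L c xs \<Longrightarrow> \<exists>v'. good L (run_moves L c xs) v' \<and>
  phi L (run_moves L c xs) + qq L (run_moves L c xs) v' \<le> phi L c + qq L c v + 2 * int (length xs)"
proof (induction xs arbitrary: c v)
  case Nil
  then show ?case by auto
next
  case (Cons x xs)
  have lm: "legal_move L c x" and ls: "legal_seq L (apply_move L c x) xs" using Cons.prems by auto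
  have s: "good L (apply_move L c x) x" "phi L (apply_move L c x) + qq L (apply_move L c x) x \<le> phi L c + qq L c v + 2"
    using move_step[OF Cons.prems(1) lm] by auto
  obtain v' where "good L (run_moves L (apply_move L c x) xs) v'"
    "phi L (run_moves L (apply_move L c x) xs) + qq L (run_moves L (apply_move L c x) xs) v'
      \<le> phi L (apply_move L c x) + qq L (apply_move L c x) x + 2 * int (length xs)"
    using Cons.IH[OF s(1) ls] by blast
  then show ?case using s(2) unfolding run_moves_Cons by (intro exI[of _ v']) auto
qed

lemma sum_id2: "a \<le> b + 1 \<Longrightarrow> 2 * (\<Sum>p\<in>{a..b}. p) = b*(b+1) - a*(a-1)" for a b :: int
proof (induction "nat (b + 1 - a)" arbitrary: b)
  case 0
  then have "a = b + 1" by simp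
  then show ?case by (simp add: algebra_simps)
next
  case (Suc k)
  then have ab: "a \<le> b" by simp
  have "{a..b} = insert b {a..b-1}" using ab by auto
  then have "(\<Sum>p\<in>{a..b}. p) = b + (\<Sum>p\<in>{a..b-1}. p)" by simp
  moreover have "2 * (\<Sum>p\<in>{a..b-1}. p) = (b-1)*(b-1+1) - a*(a-1)" using Suc ab by simp
  ultimately show ?case by (simp add: algebra_simps)
qed

lemma phi_shp0:
  assumes "1 \<le> b0" "b0 \<le> L"
  shows "2 * phi L (shp L b0 0 vl X Y) = wt X * ((b0-1)*b0) + wt Y * (L*(L+1) - (b0+1)*b0)"
proof -
  have split: "{1..L} = {1..b0-1} \<union> insert b0 {b0+1..L}" using assms by auto
  have "phi L (shp L b0 0 vl X Y) = (\<Sum>p\<in>{1..b0-1}. wt (shp L b0 0 vl X Y p) * p) + (wt (shp L b0 0 vl X Y b0) * b0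
     + (\<Sum>p\<in>{b0+1..L}. wt (shp L b0 0 vl X Y p) * p))"
    unfolding phi_def split by (subst sum.union_disjoint) auto
  also have "\<dots> = wt X * (\<Sum>p\<in>{1..b0-1}. p) + wt Y * (\<Sum>p\<in>{b0+1..L}. p)"
    unfolding sum_distrib_left using assms by (auto simp: shp_def intro!: sum.cong)
  finally have "2 * phi L (shp L b0 0 vl X Y) = wt X * (2 * (\<Sum>p\<in>{1..b0-1}. p)) + wt Y * (2 * (\<Sum>p\<in>{b0+1..L}. p))"
    by (simp add: algebra_simps)
  moreover have s1: "2 * (\<Sum>p\<in>{1..b0-1}. p) = (b0-1)*b0" using sum_id2[of 1 "b0-1"] assms by (simp add: algebra_simps)
  moreover have s2: "2 * (\<Sum>p\<in>{b0+1..L}. p) = L*(L+1) - (b0+1)*b0" using sum_id2[of "b0+1" L] assms by (simp add: algebra_simps)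
  ultimately show ?thesis by simp
qed

lemma lower_bound:
  assumes m1: "1 \<le> m" and mn: "m \<le> n"
    and ls: "legal_seq (int n + int m + 1) (init_conf n m) xs"
    and rf: "run_moves (int n + int m + 1) (init_conf n m) xs = final_conf n m"
  shows "n * m + n + m \<le> length xs"
proof -
  let ?L = "int n + int m + 1"
  have wi: "cwf ?L (init_conf n m) (int n + 1)"
    using shp_wf[of "int n + 1" 0 ?L Black White True] init_shp[of n m True] by simp
  have li: "\<And>i. lt (init_conf n m) (int n + 1) i = (if 1 \<le> i \<and> i \<le> int n then Black else if int n < i \<and> i \<le> int n + int m then White else Empty)"
    unfolding lt_def init_conf_def by auto
  have gi: "good ?L (init_conf n m) (int n + 1)"
    unfolding good_def using wi m1 li[of 1] li[of "int n + 1"] mn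
    by (intro conjI wi exI[of _ 1] exI[of _ "int n + 1"]) auto
  have lf: "\<And>i. lt (final_conf n m) (int m + 1) i = (if 1 \<le> i \<and> i \<le> int m then White else if int m < i \<and> i \<le> int n + int m then Black else Empty)"
    unfolding lt_def final_conf_def by auto
  have wf: "cwf ?L (final_conf n m) (int m + 1)"
    using shp_wf[of "int m + 1" 0 ?L White Black True] final_shp[of n m True] by simp
  obtain v' where g': "good ?L (final_conf n m) v'"
    and ineq: "phi ?L (final_conf n m) + qq ?L (final_conf n m) v' \<le> phi ?L (init_conf n m) + qq ?L (init_conf n m) (int n + 1) + 2 * int (length xs)"
    using chain[OF gi ls] rf by auto
  have "v' = int m + 1"
  proof (rule ccontr)
    assume "v' \<noteq> int m + 1"
    moreover have "cwf ?L (final_conf n m) v'" using g' unfolding good_def by simp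
    ultimately show False using wf unfolding cwf_def by auto
  qed
  then have ineq': "phi ?L (final_conf n m) + qq ?L (final_conf n m) (int m + 1) \<le> phi ?L (init_conf n m) + qq ?L (init_conf n m) (int n + 1) + 2 * int (length xs)"
    using ineq by simp
  have qi: "qq ?L (init_conf n m) (int n + 1) = - int m"
  proof -
    have "isMax (lt (init_conf n m) (int n + 1)) Black (?L - 1) (int n)" unfolding isMax_def li using mn m1 by auto
    moreover have "isMax (lt (init_conf n m) (int n + 1)) White (?L - 1) (int n + int m)" unfolding isMax_def li using mn m1 by auto
    ultimately show ?thesis unfolding qq_def by (simp add: isMax_mx upI_def)
  qed
  have qf: "qq ?L (final_conf n m) (int m + 1) = int n"
  proof -
    have "isMax (lt (final_conf n m) (int m + 1)) Black (?L - 1) (int n + int m)" unfolding isMax_def lf using mn m1 by auto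
    moreover have "isMax (lt (final_conf n m) (int m + 1)) White (?L - 1) (int m)" unfolding isMax_def lf using mn m1 by auto
    ultimately show ?thesis unfolding qq_def by (simp add: isMax_mx upI_def)
  qed
  have pi: "2 * phi ?L (init_conf n m) = int n * (int n + 1) - (?L * (?L+1) - (int n + 2) * (int n + 1))"
    using phi_shp0[of "int n + 1" ?L True Black White] init_shp[of n m True] by (simp add: algebra_simps)
  have pf: "2 * phi ?L (final_conf n m) = - (int m * (int m + 1)) + (?L * (?L+1) - (int m + 2) * (int m + 1))"
    using phi_shp0[of "int m + 1" ?L True White Black] final_shp[of n m True] by (simp add: algebra_simps)
  have "2 * phi ?L (final_conf n m) - 2 * phi ?L (init_conf n m) = 2 * (2 * int n * int m + int n + int m)"
    unfolding pi pf by (simp add: algebra_simps)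
  then have "2 * int n * int m + int n + int m + int n + int m \<le> 2 * int (length xs)"
    using ineq' qi qf by simp
  then have "int (n * m + n + m) \<le> int (length xs)" by simp
  then show ?thesis by linarith
qed

theorem theorem3:
  fixes n m :: nat and d :: int
  assumes "1 \<le> m" and "m \<le> n" and "d \<in> {1, -1}"
  defines "L \<equiv> int n + int m + 1"
  shows "length (move_seq n m d) = n * m + n + m
    \<and> legal_seq L (init_conf n m) (move_seq n m d)
    \<and> run_moves L (init_conf n m) (move_seq n m d) = final_conf n m
    \<and> (\<forall>xs. legal_seq L (init_conf n m) xs \<and> run_moves L (init_conf n m) xs = final_conf n m
            \<longrightarrow> n * m + n + m \<le> length xs)
    \<and> d = int n + 1 - hd (move_seq n m d)"
proof -
  have dd: "d = 1 \<or> d = -1" using assms(3) by auto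
  have len: "length (move_seq n m d) = n * m + n + m" unfolding move_seq_def
    by (metis diff_add_cancel length_map length_upto nat_int)
  show ?thesis unfolding L_def
    using len construction[OF assms(1,2) dd] lower_bound[OF assms(1,2)] hd_move[OF assms(1,2), of d]
    by auto
qed

end
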